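(* Let $f:\mathbb R\to(-\infty,\infty]$ be convex, finite for some $\theta>0$ and infinite for all $\theta<0$. Let $\Gamma=\Gamma(f^* )$, $\vartheta=\vartheta(f)$ and $\underline\psi=\inf\Phi_f$. Then $f^\natural\equiv-\infty$ and $\vartheta=-\infty$ when $\Gamma=-\infty$. Otherwise $\vartheta\ge0$ and $f^\natural(\theta)=f(\theta)$ for $0\le\theta<\vartheta$. When $0\le\vartheta<\infty$, $f^\natural(\theta)=\theta\Gamma<f(\theta)$ for $\theta>\vartheta$, and \[f^\natural(\vartheta)=\begin{cases} f(\vartheta)\ge\mathrm{cl}\,f(\vartheta)=\vartheta\Gamma & \text{when }\vartheta=\underline\psi,\\ \vartheta\Gamma=\mathrm{cl}\,f(\vartheta)\le f(\vartheta)&\text{when }\vartheta>\underline\psi.\end{cases}\] In all cases \[\Gamma=\inf_{\theta>0}\frac{f^\natural(\theta)}{\theta}=\inf_{\theta>0}\frac{f(\theta)}{\theta}.\] When $0\le\vartheta<\infty$, $\Gamma=f(\vartheta)/\vartheta$ provided $f$ is lower semicontinuous at $\vartheta$, and when $\vartheta=\infty$, $\Gamma=\lim_{\theta\uparrow\infty}f(\theta)/\theta$.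
   Context: $\Phi_f=\{\theta:f(\theta)<\infty\}$. $f^*(x)=\sup_\theta\{\theta x-f(\theta)\}$; $\Gamma(g)=\inf\{a:g(a)>0\}$. $f^\natural$ is the maximal convex function with $f^\natural\le f$ and $f^\natural(\theta)/\theta$ decreasing in $\theta\in(0,\infty)$ (identically $-\infty$ if no function satisfies these constraints); $\vartheta(f)=\sup\{\theta:f(\theta)=f^\natural(\theta)\}$ (possibly $+\infty$, and $-\infty$ if the set is empty). $\mathrm{cl}\,f$ is the closure of $f$: the lower semicontinuous convex function obtained by adjusting the values of $f$ at the end-points of the interval $\Phi_f$ so as to make it lower semicontinuous. *)

theory Defs
  imports "HOL-Analysis.Analysis"
begin

text \<open>Extended-real valued functions on the real line. Convexity for functions
  never taking the value minus infinity (values in (-inf, +inf]).\<close>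
definition econvex :: "(real \<Rightarrow> ereal) \<Rightarrow> bool" where
  "econvex g \<longleftrightarrow> (\<forall>x y t. 0 < t \<and> t < 1 \<longrightarrow>
      g ((1 - t) * x + t * y) \<le> ereal (1 - t) * g x + ereal t * g y)"

definition dom_f :: "(real \<Rightarrow> ereal) \<Rightarrow> real set" where
  "dom_f f = {\<theta>. f \<theta> < \<infinity>}"

definition fconj :: "(real \<Rightarrow> ereal) \<Rightarrow> real \<Rightarrow> ereal" where
  "fconj f x = (SUP \<theta>. ereal (\<theta> * x) - f \<theta>)"

text \<open>Gamma(g) = inf {a. g a > 0} (an extended real; inf of the empty set is +inf).\<close>
definition Gam :: "(real \<Rightarrow> ereal) \<Rightarrow> ereal" where
  "Gam g = Inf (ereal ` {a. g a > 0})"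

definition nat_cands :: "(real \<Rightarrow> ereal) \<Rightarrow> (real \<Rightarrow> ereal) set" where
  "nat_cands f = {g. econvex g \<and> (\<forall>\<theta>. g \<theta> \<noteq> -\<infinity>) \<and> (\<forall>\<theta>. g \<theta> \<le> f \<theta>) \<and>
      (\<forall>\<theta>1 \<theta>2. 0 < \<theta>1 \<and> \<theta>1 \<le> \<theta>2 \<longrightarrow> g \<theta>2 / ereal \<theta>2 \<le> g \<theta>1 / ereal \<theta>1)}"

definition fnat :: "(real \<Rightarrow> ereal) \<Rightarrow> real \<Rightarrow> ereal" where
  "fnat f = (if \<exists>g\<in>nat_cands f. \<forall>h\<in>nat_cands f. h \<le> g
             then (THE g. g \<in> nat_cands f \<and> (\<forall>h\<in>nat_cands f. h \<le> g))
             else (\<lambda>_. -\<infinity>))"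

text \<open>vartheta(f) = sup {theta. f theta = f-natural theta} (sup of empty set is -inf).\<close>
definition vtheta :: "(real \<Rightarrow> ereal) \<Rightarrow> ereal" where
  "vtheta f = Sup (ereal ` {\<theta>. f \<theta> = fnat f \<theta>})"

text \<open>Closure of f: its lower semicontinuous hull, cl f x = liminf_{y -> x} f y
  (including y = x).  For a convex function on the line this is exactly f with
  the values at the end-points of Phi_f adjusted to make it lsc.\<close>
definition clf :: "(real \<Rightarrow> ereal) \<Rightarrow> real \<Rightarrow> ereal" where
  "clf f x = Liminf (nhds x) f"

definition lsc_at :: "(real \<Rightarrow> ereal) \<Rightarrow> real \<Rightarrow> bool" where
  "lsc_at f x \<longleftrightarrow> f x \<le> Liminf (at x) f"

end

theory Submission
  imports Defs
begin



locale P9 =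
  fixes f :: "real \<Rightarrow> ereal"
  assumes conv: "econvex f"
    and nominf: "\<forall>\<theta>. f \<theta> \<noteq> -\<infinity>"
    and finpos: "\<exists>\<theta>>0. f \<theta> < \<infinity>"
    and infneg: "\<forall>\<theta><0. f \<theta> = \<infinity>"
begin

definition r where "r \<theta> = f \<theta> / ereal \<theta>"
definition m where "m \<theta> = (INF s\<in>{0<..\<theta>}. r s)"
definition Gm where "Gm = (INF s\<in>{0<..}. r s)"
definition isE where "isE \<theta> \<longleftrightarrow> 0<\<theta> \<and> (\<forall>s. 0<s \<and> s\<le>\<theta> \<longrightarrow> r \<theta> \<le> r s)"
definition h where "h \<theta> = (if \<theta> \<le> 0 then f \<theta> else ereal \<theta> * m \<theta>)"

lemma r_mult: "0<\<theta> \<Longrightarrow> ereal \<theta> * r \<theta> = f \<theta>"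
  by (simp add: r_def ereal_mult_divide)

lemma r_real: "0<\<theta> \<Longrightarrow> f \<theta> = ereal c \<Longrightarrow> r \<theta> = ereal (c/\<theta>)"
  by (simp add: r_def)

lemma r_inf: "0<\<theta> \<Longrightarrow> f \<theta> = \<infinity> \<Longrightarrow> r \<theta> = \<infinity>"
  by (simp add: r_def)

lemma r_nminf: "0<\<theta> \<Longrightarrow> r \<theta> \<noteq> -\<infinity>"
  using nominf by (cases "f \<theta>") (auto simp: r_def)

lemma fin_real: "f x \<noteq> \<infinity> \<Longrightarrow> \<exists>c. f x = ereal c"
  using nominf by (cases "f x") auto

lemma fcases: obtains c where "f x = ereal c" | "f x = \<infinity>"
  using nominf by (cases "f x") auto

lemma conv_real:
  assumes "0<t" "t<1" "f x = ereal a" "f y = ereal b"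
  shows "f ((1-t)*x + t*y) \<le> ereal ((1-t)*a + t*b)"
  using conv assms unfolding econvex_def by (metis plus_ereal.simps(1) times_ereal.simps(1))

lemma m_le: "0<s \<Longrightarrow> s\<le>\<theta> \<Longrightarrow> m \<theta> \<le> r s"
  unfolding m_def by (rule INF_lower) auto

lemma Gm_le: "0<s \<Longrightarrow> Gm \<le> r s"
  unfolding Gm_def by (rule INF_lower) auto

lemma m_ge: "Gm \<le> m \<theta>"
  unfolding m_def Gm_def by (rule INF_mono) auto

lemma m_anti: "\<theta>1 \<le> \<theta>2 \<Longrightarrow> m \<theta>2 \<le> m \<theta>1"
  unfolding m_def by (rule INF_mono) auto


lemma minf_if_below: assumes "\<And>B. x < ereal B" shows "(x::ereal) = -\<infinity>"
proof (cases x)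
  case (real r) with assms[of r] show ?thesis by simp
next
  case PInf with assms[of 0] show ?thesis by simp
qed simp

lemma f0neg: assumes "f 0 < 0" shows "Gm = -\<infinity>"
proof (rule minf_if_below)
  fix B
  have "f 0 \<noteq> \<infinity>" using assms by auto
  then obtain c where c: "f 0 = ereal c" using fin_real[of 0] by blast
  with assms have cneg: "c < 0" by simp
  obtain \<theta>1 where t1: "\<theta>1 > 0" "f \<theta>1 < \<infinity>" using finpos by auto
  then obtain d where d: "f \<theta>1 = ereal d" using fin_real[of \<theta>1] by auto
  define P where "P = \<bar>d\<bar> + \<bar>B\<bar>*\<theta>1 + 1"
  have Ppos: "P > 0" using t1 unfolding P_def by (simp add: add_nonneg_pos)
  define t where "t = min (1/2) (-c/(4*P))"
  have "-c/(4*P) > 0" using cneg Ppos by (simp add: divide_neg_pos)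
  hence t0: "0 < t" unfolding t_def by simp
  have t1': "t < 1" unfolding t_def by auto
  have tleP: "t \<le> -c/(4*P)" unfolding t_def by simp
  have "t*P \<le> (-c/(4*P))*P" using tleP Ppos by (intro mult_right_mono) auto
  hence tle: "t*P \<le> -c/4" using Ppos by simp
  have key: "(1-t)*c + t*d < B*(t*\<theta>1)"
  proof -
    have "1/2 \<le> 1-t" unfolding t_def by simp
    hence "(1-t)*c \<le> (1/2)*c" using cneg by (intro mult_right_mono_neg) auto
    moreover have "t*d - B*(t*\<theta>1) \<le> t * P"
    proof -
      have "t*d \<le> t*\<bar>d\<bar>" using t0 by (simp add: mult_left_mono)
      moreover have "(-B)*(t*\<theta>1) \<le> \<bar>B\<bar>*(t*\<theta>1)" using t0 t1
        by (intro mult_right_mono) auto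
      moreover have "t*P = t*\<bar>d\<bar> + \<bar>B\<bar>*(t*\<theta>1) + t" unfolding P_def by (simp add: algebra_simps)
      ultimately show ?thesis using t0 by linarith
    qed
    ultimately show ?thesis using tle cneg by linarith
  qed
  have "f ((1-t)*0 + t*\<theta>1) \<le> ereal ((1-t)*c + t*d)"
    by (rule conv_real[OF t0 t1' c d])
  hence fz: "f (t*\<theta>1) \<le> ereal ((1-t)*c + t*d)" by simp
  have tp: "0 < t*\<theta>1" using t0 t1 by simp
  have "r (t*\<theta>1) \<le> ereal ((1-t)*c + t*d) / ereal (t*\<theta>1)"
    unfolding r_def using fz tp by (intro ereal_divide_right_mono) auto
  also have "\<dots> = ereal (((1-t)*c + t*d)/(t*\<theta>1))"
  proof -
    have nz: "t*\<theta>1 \<noteq> 0" using tp by linarith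
    show ?thesis unfolding ereal_divide by (simp only: nz if_False)
  qed
  also have "\<dots> < ereal B" using key tp by (simp add: pos_divide_less_eq)
  finally have "r (t*\<theta>1) < ereal B" .
  moreover have "Gm \<le> r (t*\<theta>1)" using Gm_le tp by blast
  ultimately show "Gm < ereal B" by simp
qed

lemma mono_lemma:
  assumes "0<s" "s<\<theta>" "\<theta><\<theta>2" "r s < r \<theta>" shows "r \<theta> \<le> r \<theta>2"
proof (rule ccontr)
  assume "\<not> r \<theta> \<le> r \<theta>2"
  hence lt: "r \<theta>2 < r \<theta>" by simp
  have sp: "0<\<theta>" "0<\<theta>2" using assms by auto
  obtain a where a: "f s = ereal a" using fin_real[of s] assms(1,4) r_inf[of s] by fastforce
  obtain b where b: "f \<theta>2 = ereal b" using fin_real[of \<theta>2] lt sp(2) r_inf[of \<theta>2] by fastforce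
  define lam where "lam = (\<theta>2-\<theta>)/(\<theta>2-s)"
  have lam0: "0<lam" "lam<1" using assms unfolding lam_def by auto
  have nz: "\<theta>2 - s \<noteq> 0" using assms by simp
  have "lam * (\<theta>2 - s) = \<theta>2 - \<theta>" unfolding lam_def using nz by simp
  hence h1: "lam*\<theta>2 - lam * s = \<theta>2 - \<theta>" by (simp add: right_diff_distrib)
  have "(1-lam)*\<theta>2 + lam * s = \<theta>2 - (lam*\<theta>2 - lam * s)" by (simp add: left_diff_distrib)
  hence eq: "(1-lam)*\<theta>2 + lam * s = \<theta>" using h1 by simp
  have fle: "f \<theta> \<le> ereal ((1-lam)*b + lam*a)" using conv_real[OF lam0 b a] eq by simp
  then obtain c where c: "f \<theta> = ereal c" using fin_real[of \<theta>] by fastforce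
  have c1: "c \<le> (1-lam)*b + lam*a" using fle c by simp
  have "ereal (a/s) < ereal (c/\<theta>)" using assms r_real[OF assms(1) a] r_real[OF sp(1) c] by simp
  hence "a/s < c/\<theta>" by simp
  hence ha: "a < s*(c/\<theta>)" using assms by (simp add: divide_less_eq mult.commute)
  have "ereal (b/\<theta>2) < ereal (c/\<theta>)" using lt r_real[OF sp(2) b] r_real[OF sp(1) c] by simp
  hence "b/\<theta>2 < c/\<theta>" by simp
  hence hb: "b < \<theta>2*(c/\<theta>)" using sp by (simp add: divide_less_eq mult.commute)
  have "(1-lam)*b + lam*a < (1-lam)*(\<theta>2*(c/\<theta>)) + lam*(s*(c/\<theta>))"
    using ha hb lam0 by (intro add_less_le_mono mult_strict_left_mono mult_left_mono) auto
  also have "\<dots> = ((1-lam)*\<theta>2 + lam* s)*(c/\<theta>)" by (simp only: distrib_right mult.assoc)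
  also have "\<dots> = c" using eq sp by simp
  finally show False using c1 by simp
qed

lemma isE_down: assumes "isE \<theta>'" "0<\<theta>" "\<theta> \<le> \<theta>'" shows "isE \<theta>"
proof (rule ccontr)
  assume "\<not> isE \<theta>"
  then obtain s where s: "0<s" "s\<le>\<theta>" "r s < r \<theta>" using assms unfolding isE_def by (auto simp: not_le)
  hence "s < \<theta>" by (metis less_le order_less_irrefl)
  show False
  proof (cases "\<theta> = \<theta>'")
    case True then show ?thesis using assms s unfolding isE_def by (auto simp: not_le[symmetric])
  next
    case False
    hence "\<theta> < \<theta>'" using assms by simp
    hence "r \<theta> \<le> r \<theta>'" using mono_lemma[OF s(1) \<open>s<\<theta>\<close> _ s(3)] by blast
    hence "r s < r \<theta>'" using s by simp
    moreover have "r \<theta>' \<le> r s" using assms s unfolding isE_def by auto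
    ultimately show False by simp
  qed
qed

lemma notE_m: assumes "0<\<theta>" "\<not> isE \<theta>" shows "m \<theta> = Gm"
proof (rule antisym[OF _ m_ge])
  obtain s0 where s0: "0<s0" "s0\<le>\<theta>" "r s0 < r \<theta>" using assms unfolding isE_def by (auto simp: not_le)
  hence "s0 < \<theta>" by (metis less_le order_less_irrefl)
  show "m \<theta> \<le> Gm" unfolding Gm_def
  proof (rule INF_greatest)
    fix s assume "s \<in> {0::real<..}"
    show "m \<theta> \<le> r s"
    proof (cases "s \<le> \<theta>")
      case True then show ?thesis using m_le \<open>s\<in>_\<close> by auto
    next
      case False
      hence "r \<theta> \<le> r s" using mono_lemma[OF s0(1) \<open>s0<\<theta>\<close> _ s0(3)] by simp
      moreover have "m \<theta> \<le> r \<theta>" using m_le assms by auto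
      ultimately show ?thesis by simp
    qed
  qed
qed

lemma Gam_eq: "Gam (fconj f) = Gm"
proof (rule antisym)
  show "Gam (fconj f) \<le> Gm" unfolding Gm_def
  proof (rule INF_greatest)
    fix s :: real assume "s \<in> {0<..}"
    hence s: "0<s" by simp
    show "Gam (fconj f) \<le> r s"
    proof (cases "f s = \<infinity>")
      case False
      then obtain c where real: "f s = ereal c" using fin_real[of s] by blast
      have rs: "r s = ereal (c/s)" using r_real[OF s real] .
      show ?thesis unfolding rs
      proof (rule dense_ge)
        fix y assume y: "ereal (c/s) < y"
        show "Gam (fconj f) \<le> y"
        proof (cases y)
          case (real a)
          note ya = this
          with y have "c/s < a" by simp
          hence "c < s*a" using s by (simp add: divide_less_eq mult.commute)
          hence "0 < ereal (s*a) - f s" using \<open>f s = ereal c\<close> by simp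
          also have "\<dots> \<le> fconj f a" unfolding fconj_def by (rule SUP_upper) auto
          finally have "a \<in> {a. fconj f a > 0}" by simp
          hence "Gam (fconj f) \<le> ereal a" unfolding Gam_def by (intro Inf_lower) auto
          thus ?thesis using ya by simp
        qed (use y in auto)
      qed
    qed (use s nominf r_inf in auto)
  qed
next
  show "Gm \<le> Gam (fconj f)" unfolding Gam_def
  proof (rule Inf_greatest)
    fix y assume "y \<in> ereal ` {a. fconj f a > 0}"
    then obtain a where y: "y = ereal a" and "fconj f a > 0" by auto
    then obtain \<theta> where th: "0 < ereal (\<theta>*a) - f \<theta>" unfolding fconj_def by (auto simp: less_SUP_iff)
    consider "\<theta><0" | "\<theta>=0" | "\<theta>>0" by linarith
    then show "Gm \<le> y"
    proof cases
      case 1 then show ?thesis using th infneg by auto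
    next
      case 2
      then have "f 0 < 0" using th nominf by (cases "f 0") auto
      then show ?thesis using f0neg by simp
    next
      case 3
      obtain c where c: "f \<theta> = ereal c" using th fin_real[of \<theta>] by fastforce
      then have "c < \<theta>*a" using th by simp
      hence "c/\<theta> < a" using 3 by (simp add: divide_less_eq mult.commute)
      hence "r \<theta> \<le> ereal a" using r_real[OF 3 c] by simp
      then show ?thesis using Gm_le[OF 3] y by simp
    qed
  qed
qed

end



lemma Bineq:
  fixes s1 x z s2 y :: real
  assumes "0<s1" "s1 \<le> x" "x<z" "z<s2" "s2\<le>y"
  shows "(z-x)/(y-x)*y \<le> (z-s1)/(s2-s1)* s2"
proof -
  have id: "(s2-x)*((z-s1)* s2*(y-x) - (z-x)*y*(s2-s1)) = s2*(x-s1)*(s2-z)*(y-x) + (z-x)*x*(y-s2)*(s2-s1)"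
    by (simp add: algebra_simps)
  have "0 \<le> s2*(x-s1)*(s2-z)*(y-x) + (z-x)*x*(y-s2)*(s2-s1)"
    using assms by (intro add_nonneg_nonneg mult_nonneg_nonneg) auto
  hence "0 \<le> (s2-x)*((z-s1)* s2*(y-x) - (z-x)*y*(s2-s1))" using id by simp
  hence D: "(z-x)*y*(s2-s1) \<le> (z-s1)* s2*(y-x)" using assms
    by (simp add: zero_le_mult_iff)
  have p1: "y - x > 0" "s2 - s1 > 0" using assms by auto
  show ?thesis
    by (metis D linorder_not_less p1(1,2) pos_divide_less_eq pos_less_divide_eq times_divide_eq_left)
qed

lemma ereal_le_eps: assumes "\<And>e. 0<e \<Longrightarrow> L \<le> ereal (A + e)" shows "L \<le> ereal A"
proof (cases L)
  case (real l)
  then show ?thesis using assms by (auto intro: field_le_epsilon)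
next
  case PInf
  then show ?thesis using assms[of 1] by simp
qed simp

lemma mult_div_cancel: "0<x \<Longrightarrow> (ereal x * a) / ereal x = a" by (cases a) auto

context P9 begin

lemma cand_bound:
  assumes g: "g \<in> nat_cands f"
  shows "\<exists>K. \<forall>s>0. ereal K \<le> r s"
proof -
  have gc: "econvex g" and gn: "\<forall>\<theta>. g \<theta> \<noteq> -\<infinity>" and gf: "\<forall>\<theta>. g \<theta> \<le> f \<theta>"
    and gm: "\<forall>\<theta>1 \<theta>2. 0 < \<theta>1 \<and> \<theta>1 \<le> \<theta>2 \<longrightarrow> g \<theta>2 / ereal \<theta>2 \<le> g \<theta>1 / ereal \<theta>1"
    using g unfolding nat_cands_def by auto
  obtain \<theta>1 where t1: "\<theta>1 > 0" "f \<theta>1 < \<infinity>" using finpos by auto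
  have "g \<theta>1 < \<infinity>" using gf t1 by (meson le_less_trans)
  then obtain a where a: "g \<theta>1 = ereal a" using gn by (cases "g \<theta>1") auto
  have gfin: "g Y = ereal (real_of_ereal (g Y))" if "Y \<ge> \<theta>1" for Y
  proof -
    have "g Y / ereal Y \<le> g \<theta>1 / ereal \<theta>1" using gm t1(1) that by blast
    also have "g \<theta>1 / ereal \<theta>1 = ereal (a/\<theta>1)" using a t1 by simp
    finally have "g Y / ereal Y \<le> ereal (a/\<theta>1)" .
    hence "g Y \<noteq> \<infinity>" using that t1 by auto
    thus ?thesis using gn by (cases "g Y") auto
  qed
  define q where "q = 2*\<theta>1"
  define b where "b = real_of_ereal (g q)"
  have b: "g q = ereal b" using gfin[of q] t1 unfolding q_def b_def by simp
  define K where "K = (b - a)/\<theta>1 - \<bar>2*a - b\<bar>/q"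
  have bndY: "ereal K \<le> g Y / ereal Y" if Y: "Y > q" for Y
  proof -
    define c where "c = real_of_ereal (g Y)"
    have c: "g Y = ereal c" using gfin[of Y] Y t1 unfolding c_def q_def by simp
    define lam where "lam = \<theta>1/(Y-\<theta>1)"
    have Yt: "Y - \<theta>1 > \<theta>1" using Y unfolding q_def by simp
    have lam0: "0<lam" "lam<1" unfolding lam_def using Yt t1 by (auto simp: divide_less_eq)
    have nzY: "Y - \<theta>1 \<noteq> 0" using Yt t1 by simp
    have lY: "lam * (Y - \<theta>1) = \<theta>1" unfolding lam_def using nzY by simp
    have "(1-lam)*\<theta>1 + lam*Y = \<theta>1 + lam*(Y-\<theta>1)" by (simp add: algebra_simps)
    hence eqq: "(1-lam)*\<theta>1 + lam*Y = q" using lY unfolding q_def by simp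
    have "g ((1-lam)*\<theta>1 + lam*Y) \<le> ereal (1-lam) * g \<theta>1 + ereal lam * g Y"
      using gc lam0 unfolding econvex_def by blast
    hence ineq: "b \<le> (1-lam)*a + lam*c" using a b c eqq by simp
    have "b*(Y-\<theta>1) \<le> ((1-lam)*a + lam*c)*(Y-\<theta>1)" using ineq Yt t1 by (intro mult_right_mono) auto
    also have "\<dots> = (Y-\<theta>1)*a - (lam*(Y-\<theta>1))*a + (lam*(Y-\<theta>1))*c" by (simp add: algebra_simps)
    also have "\<dots> = (Y - 2*\<theta>1)*a + \<theta>1*c" using lY by (simp add: algebra_simps)
    finally have "b*(Y-\<theta>1) \<le> (Y - 2*\<theta>1)*a + \<theta>1*c" .
    hence num: "(b-a)*Y + (2*a-b)*\<theta>1 \<le> \<theta>1*c" by (simp add: algebra_simps)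
    have Yp: "Y > 0" using Yt t1 by simp
    have "(b-a)/\<theta>1 + (2*a-b)/Y = ((b-a)*Y + (2*a-b)*\<theta>1)/(\<theta>1*Y)" using Yp t1 by (simp add: field_simps)
    also have "\<dots> \<le> (\<theta>1*c)/(\<theta>1*Y)" using num Yp t1 by (intro divide_right_mono) auto
    also have "\<dots> = c/Y" using t1 by simp
    finally have c1: "(b-a)/\<theta>1 + (2*a-b)/Y \<le> c/Y" .
    have "\<bar>2*a-b\<bar>/Y \<le> \<bar>2*a-b\<bar>/q" using Y t1 unfolding q_def by (intro divide_left_mono) auto
    moreover have "(-\<bar>2*a-b\<bar>)/Y \<le> (2*a-b)/Y" using Yp by (intro divide_right_mono) auto
    hence "-(\<bar>2*a-b\<bar>/Y) \<le> (2*a-b)/Y" by simp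
    ultimately have "K \<le> c/Y" using c1 unfolding K_def by linarith
    thus ?thesis using c Yp by simp
  qed
  have "\<forall>s>0. ereal K \<le> r s"
  proof (intro allI impI)
    fix s :: real assume s: "s>0"
    define Y where "Y = max s q + 1"
    have Y: "Y > q" "s \<le> Y" unfolding Y_def by auto
    have "ereal K \<le> g Y / ereal Y" by (rule bndY[OF Y(1)])
    also have "\<dots> \<le> g s / ereal s" using gm s Y by auto
    also have "\<dots> \<le> f s / ereal s" using gf s by (simp add: ereal_divide_right_mono)
    finally show "ereal K \<le> r s" unfolding r_def .
  qed
  thus ?thesis by blast
qed

lemma dominate: assumes g: "g \<in> nat_cands f" shows "g \<theta> \<le> h \<theta>"
proof -
  have gf: "\<forall>\<theta>. g \<theta> \<le> f \<theta>"
    and gm: "\<forall>\<theta>1 \<theta>2. 0 < \<theta>1 \<and> \<theta>1 \<le> \<theta>2 \<longrightarrow> g \<theta>2 / ereal \<theta>2 \<le> g \<theta>1 / ereal \<theta>1"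
    using g unfolding nat_cands_def by auto
  show ?thesis
  proof (cases "\<theta> \<le> 0")
    case True then show ?thesis using gf by (simp add: h_def)
  next
    case False
    hence tp: "0 < \<theta>" by simp
    have "g \<theta> / ereal \<theta> \<le> m \<theta>" unfolding m_def
    proof (rule INF_greatest)
      fix s assume "s \<in> {0<..\<theta>}"
      hence s: "0<s" "s\<le>\<theta>" by auto
      have "g \<theta> / ereal \<theta> \<le> g s / ereal s" using gm s by auto
      also have "\<dots> \<le> f s / ereal s" using gf s by (simp add: ereal_divide_right_mono)
      finally show "g \<theta> / ereal \<theta> \<le> r s" unfolding r_def .
    qed
    hence "ereal \<theta> * (g \<theta> / ereal \<theta>) \<le> ereal \<theta> * m \<theta>" using tp by (intro ereal_mult_left_mono) auto
    thus ?thesis using tp by (simp add: h_def ereal_mult_divide)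
  qed
qed

lemma nocand: assumes "Gm = -\<infinity>" shows "nat_cands f = {}"
proof (rule ccontr)
  assume "nat_cands f \<noteq> {}"
  then obtain g where "g \<in> nat_cands f" by auto
  then obtain K where K: "\<forall>s>0. ereal K \<le> r s" using cand_bound by blast
  have "ereal K \<le> Gm" unfolding Gm_def by (rule INF_greatest) (use K in auto)
  thus False using assms by simp
qed

lemma fnat_minf: assumes "Gm = -\<infinity>" shows "fnat f = (\<lambda>_. -\<infinity>)"
  using nocand[OF assms] unfolding fnat_def by simp

lemma fnat_h: assumes hc: "h \<in> nat_cands f" shows "fnat f = h"
proof -
  have all: "\<forall>g\<in>nat_cands f. g \<le> h" using dominate by (auto simp: le_fun_def)
  have "(THE g. g \<in> nat_cands f \<and> (\<forall>h'\<in>nat_cands f. h' \<le> g)) = h"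
  proof (rule the_equality)
    show "h \<in> nat_cands f \<and> (\<forall>h'\<in>nat_cands f. h' \<le> h)" using hc all by simp
  next
    fix g assume "g \<in> nat_cands f \<and> (\<forall>h'\<in>nat_cands f. h' \<le> g)"
    thus "g = h" using hc all by (metis antisym)
  qed
  thus ?thesis unfolding fnat_def using hc all by auto
qed

end


context P9 begin

lemma f0_ge: "Gm \<noteq> -\<infinity> \<Longrightarrow> 0 \<le> f 0"
  using f0neg by force

lemma m_nminf: "Gm \<noteq> -\<infinity> \<Longrightarrow> m \<theta> \<noteq> -\<infinity>"
  using m_ge[of \<theta>] by auto

lemma hpos: "0<\<theta> \<Longrightarrow> h \<theta> = ereal \<theta> * m \<theta>"
  by (simp add: h_def)

lemma h_nminf: assumes "Gm \<noteq> -\<infinity>" shows "h \<theta> \<noteq> -\<infinity>"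
proof (cases "\<theta> \<le> 0")
  case True then show ?thesis using nominf by (simp add: h_def)
next
  case False
  then show ?thesis using m_nminf[OF assms, of \<theta>] by (cases "m \<theta>") (auto simp: h_def)
qed

lemma h_le_f: "h \<theta> \<le> f \<theta>"
proof (cases "\<theta> \<le> 0")
  case True then show ?thesis by (simp add: h_def)
next
  case False
  hence tp: "0<\<theta>" by simp
  have "ereal \<theta> * m \<theta> \<le> ereal \<theta> * r \<theta>" using m_le[OF tp order_refl] tp by (intro ereal_mult_left_mono) auto
  thus ?thesis using r_mult[OF tp] hpos[OF tp] by simp
qed

lemma h_div: "0<\<theta> \<Longrightarrow> h \<theta> / ereal \<theta> = m \<theta>"
  by (simp add: hpos mult_div_cancel)

lemma mz_le_fz: "0<z \<Longrightarrow> ereal z * m z \<le> f z"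
proof -
  assume zp: "0<z"
  have "ereal z * m z \<le> ereal z * r z" using m_le[OF zp order_refl] zp by (intro ereal_mult_left_mono) auto
  thus ?thesis using r_mult[OF zp] by simp
qed

lemma pw0:
  assumes "0<z" "z<y" "0<t" "t<1" "z = t*y" "f 0 = ereal c0" "0 \<le> c0" "0<s" "s\<le>y" "r s = ereal \<rho>"
  shows "ereal z * m z \<le> ereal ((1-t)*c0 + z*\<rho>)"
proof (cases "s \<le> z")
  case True
  have "m z \<le> ereal \<rho>" using m_le[OF assms(8) True] assms(10) by simp
  hence "ereal z * m z \<le> ereal z * ereal \<rho>" using assms(1) by (intro ereal_mult_left_mono) auto
  also have "\<dots> \<le> ereal ((1-t)*c0 + z*\<rho>)" using assms(4,7) by simp
  finally show ?thesis .
next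
  case False
  hence sz: "z < s" by simp
  define u where "u = z/s"
  have u0: "0<u" "u<1" unfolding u_def using assms sz by auto
  have us: "u* s = z" unfolding u_def using assms by simp
  have fs: "f s = ereal (s*\<rho>)" using r_mult[OF assms(8)] assms(10) by simp
  have "f ((1-u)*0 + u* s) \<le> ereal ((1-u)*c0 + u*(s*\<rho>))" by (rule conv_real[OF u0 assms(6) fs])
  hence fz: "f z \<le> ereal ((1-u)*c0 + z*\<rho>)" using us by (simp add: mult.assoc[symmetric])
  have "t = z/y" using assms by simp
  also have "\<dots> \<le> z/s" using assms by (intro divide_left_mono) auto
  finally have "t \<le> u" unfolding u_def .
  hence "(1-u)*c0 \<le> (1-t)*c0" using assms(7) by (intro mult_right_mono) auto
  hence "ereal ((1-u)*c0 + z*\<rho>) \<le> ereal ((1-t)*c0 + z*\<rho>)" by simp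
  with fz mz_le_fz[OF assms(1)] show ?thesis by (meson order_trans)
qed

lemma pw2:
  assumes s1: "0<s1" "s1\<le>x" and xz: "x<z" and s2: "0<s2" "s2\<le>y" and zy: "z<y"
    and zdef: "z = (1-t)*x + t*y" and t: "0<t" "t<1" and ra: "r s1 = ereal a" and rb: "r s2 = ereal b"
  shows "ereal z * m z \<le> ereal ((1-t)*(x*a) + t*(y*b))"
proof -
  have zp: "0<z" "0<x" using s1 xz by auto
  have ma: "m z \<le> ereal a" using m_le[of s1 z] s1 xz ra by simp
  show ?thesis
  proof (cases "s2 \<le> z")
    case True
    have mb: "m z \<le> ereal b" using m_le[OF s2(1) True] rb by simp
    have "m z \<le> ereal (min a b)" using ma mb by (simp add: min_def)
    hence "ereal z * m z \<le> ereal z * ereal (min a b)" using zp by (intro ereal_mult_left_mono) auto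
    also have "\<dots> = ereal ((1-t)*(x*min a b) + t*(y*min a b))"
    proof -
      have eqr: "z*min a b = (1-t)*(x*min a b) + t*(y*min a b)" unfolding zdef by (simp add: algebra_simps)
      show ?thesis by (simp only: times_ereal.simps(1) eqr)
    qed
    also have "\<dots> \<le> ereal ((1-t)*(x*a) + t*(y*b))"
    proof -
      have "(1-t)*(x*min a b) \<le> (1-t)*(x*a)" using t zp by (intro mult_left_mono) auto
      moreover have "t*(y*min a b) \<le> t*(y*b)" using t zp zy by (intro mult_left_mono) auto
      ultimately show ?thesis by simp
    qed
    finally show ?thesis .
  next
    case False
    hence zs2: "z < s2" by simp
    show ?thesis
    proof (cases "a \<le> b")
      case True
      have "ereal z * m z \<le> ereal z * ereal a" using ma zp by (intro ereal_mult_left_mono) auto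
      also have "\<dots> = ereal ((1-t)*(x*a) + t*(y*a))"
      proof -
        have eqr: "z*a = (1-t)*(x*a) + t*(y*a)" unfolding zdef by (simp add: algebra_simps)
        show ?thesis by (simp only: times_ereal.simps(1) eqr)
      qed
      also have "\<dots> \<le> ereal ((1-t)*(x*a) + t*(y*b))"
      proof -
        have "t*(y*a) \<le> t*(y*b)" using t zp zy True by (intro mult_left_mono) auto
        thus ?thesis by simp
      qed
      finally show ?thesis .
    next
      case False
      hence ab: "b < a" by simp
      define u where "u = (z - s1)/(s2 - s1)"
      have s12: "s1 < s2" using s1 xz zs2 by simp
      have u0: "0<u" "u<1" unfolding u_def using s1 xz zs2 s12 by (auto simp: divide_less_eq)
      have us: "u*(s2 - s1) = z - s1" unfolding u_def using s12 by simp
      have uz: "(1-u)* s1 + u* s2 = z"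
      proof -
        have "(1-u)* s1 + u* s2 = s1 + u*(s2-s1)" by (simp add: algebra_simps)
        thus ?thesis using us by simp
      qed
      have fa: "f s1 = ereal (s1*a)" using r_mult[OF s1(1)] ra by simp
      have fb: "f s2 = ereal (s2*b)" using r_mult[OF s2(1)] rb by simp
      have "f ((1-u)* s1 + u* s2) \<le> ereal ((1-u)*(s1*a) + u*(s2*b))" by (rule conv_real[OF u0 fa fb])
      hence fz: "f z \<le> ereal ((1-u)*(s1*a) + u*(s2*b))" using uz by simp
      have tq: "t = (z-x)/(y-x)"
      proof -
        have "z - x = t*(y-x)" using zdef by (simp add: algebra_simps)
        thus ?thesis using xz zy by simp
      qed
      have B: "t*y \<le> u* s2" unfolding tq u_def using Bineq[OF s1 xz zs2 s2(2)] by simp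
      have e1: "(1-u)*(s1*a) + u*(s2*b) = z*a - (u* s2)*a + (u* s2)*b"
      proof -
        have "(1-u)*(s1*a) = ((1-u)* s1)*a" by simp
        also have "(1-u)* s1 = z - u* s2" using uz by simp
        finally show ?thesis by (simp add: algebra_simps)
      qed
      have e2: "(1-t)*(x*a) + t*(y*b) = z*a - (t*y)*a + (t*y)*b"
      proof -
        have "(1-t)*(x*a) = ((1-t)*x)*a" by simp
        also have "(1-t)*x = z - t*y" using zdef by simp
        finally show ?thesis by (simp add: algebra_simps)
      qed
      have "0 \<le> (u* s2 - t*y)*(a - b)" using B ab by (intro mult_nonneg_nonneg) auto
      hence "0 \<le> (u* s2)*a - (u* s2)*b - (t*y)*a + (t*y)*b" by (simp add: algebra_simps)
      hence "(1-u)*(s1*a) + u*(s2*b) \<le> (1-t)*(x*a) + t*(y*b)" using e1 e2 by linarith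
      hence "f z \<le> ereal ((1-t)*(x*a) + t*(y*b))" using fz by (meson ereal_less_eq(3) order_trans)
      with mz_le_fz[OF zp(1)] show ?thesis by (meson order_trans)
    qed
  qed
qed

end


context P9 begin

lemma inf_rhs:
  assumes G: "Gm \<noteq> -\<infinity>" and t: "0<t" "t<1" and inf: "h x = \<infinity> \<or> h y = \<infinity>"
  shows "w \<le> ereal (1-t) * h x + ereal t * h y"
proof -
  have hx: "h x \<noteq> -\<infinity>" and hy: "h y \<noteq> -\<infinity>" using h_nminf[OF G] by auto
  have "ereal (1-t) * h x + ereal t * h y = \<infinity>"
    using hx hy inf t by (cases "h x"; cases "h y") auto
  thus ?thesis by (metis top_greatest top_ereal_def)
qed

lemma below_m:
  assumes "m y = ereal M" "0 < e"
  shows "\<exists>s \<rho>. 0<s \<and> s\<le>y \<and> r s = ereal \<rho> \<and> \<rho> < M + e"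
proof -
  have "m y < ereal (M + e)" using assms by simp
  then obtain s where s: "s \<in> {0<..y}" "r s < ereal (M+e)" unfolding m_def by (auto simp: INF_less_iff)
  have "r s \<noteq> -\<infinity>" using r_nminf s by auto
  then obtain \<rho> where "r s = ereal \<rho>" using s by (cases "r s") auto
  thus ?thesis using s by auto
qed

lemma hconv_lt:
  assumes G: "Gm \<noteq> -\<infinity>" and xy: "x<y" and t: "0<t" "t<1"
  shows "h ((1-t)*x+t*y) \<le> ereal (1-t) * h x + ereal t * h y"
proof -
  define z where "z = (1-t)*x+t*y"
  have d1: "z - x = t*(y-x)" unfolding z_def by (simp add: algebra_simps)
  have "0 < t*(y-x)" using xy t by simp
  hence xz: "x < z" using d1 by linarith
  have d2: "y - z = (1-t)*(y-x)" unfolding z_def by (simp add: algebra_simps)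
  have "0 < (1-t)*(y-x)" using xy t by simp
  hence zy: "z < y" using d2 by linarith
  consider "x<0" | "x=0" | "x>0" by linarith
  then have "h z \<le> ereal (1-t) * h x + ereal t * h y"
  proof cases
    case 1
    hence "h x = \<infinity>" using infneg by (simp add: h_def)
    thus ?thesis using inf_rhs[OF G t] by blast
  next
    case 2
    show ?thesis
    proof (cases "f 0 = \<infinity> \<or> m y = \<infinity>")
      case True
      hence "h x = \<infinity> \<or> h y = \<infinity>" using 2 xy by (auto simp: h_def)
      thus ?thesis using inf_rhs[OF G t] by blast
    next
      case False
      then obtain c0 where c0: "f 0 = ereal c0" using fin_real[of 0] by blast
      have c0p: "0 \<le> c0" using f0_ge[OF G] c0 by simp
      obtain My where My: "m y = ereal My" using False m_nminf[OF G, of y] by (cases "m y") auto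
      have yp: "0 < y" using 2 xy by simp
      have zt: "z = t*y" unfolding z_def using 2 by simp
      have zp: "0 < z" using zt t yp by simp
      have rhs: "ereal (1-t) * h x + ereal t * h y = ereal ((1-t)*c0 + t*(y*My))"
        using 2 c0 My yp by (simp add: h_def)
      have "ereal z * m z \<le> ereal ((1-t)*c0 + t*(y*My))"
      proof (rule ereal_le_eps)
        fix e :: real assume e: "0<e"
        obtain s \<rho> where s: "0<s" "s\<le>y" "r s = ereal \<rho>" "\<rho> < My + e/z"
          using below_m[OF My, of "e/z"] e zp by auto
        have "ereal z * m z \<le> ereal ((1-t)*c0 + z*\<rho>)"
          by (rule pw0[OF zp zy t zt c0 c0p s(1,2,3)])
        also have "\<dots> \<le> ereal ((1-t)*c0 + t*(y*My) + e)"
        proof -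
          have "z*\<rho> \<le> z*(My + e/z)" using s zp by (intro mult_left_mono) auto
          also have "\<dots> = z*My + z*(e/z)" by (simp add: distrib_left)
          also have "\<dots> = t*(y*My) + e"
          proof -
            have q1: "z*(e/z) = e" using zp by simp
            have q2: "z*My = t*(y*My)" using zt by simp
            show ?thesis using q1 q2 by linarith
          qed
          finally show ?thesis by simp
        qed
        finally show "ereal z * m z \<le> ereal ((1-t)*c0 + t*(y*My) + e)" .
      qed
      thus ?thesis using rhs hpos[OF zp] by simp
    qed
  next
    case 3
    show ?thesis
    proof (cases "m x = \<infinity> \<or> m y = \<infinity>")
      case True
      hence "h x = \<infinity> \<or> h y = \<infinity>" using 3 xy by (auto simp: h_def)
      thus ?thesis using inf_rhs[OF G t] by blast
    next
      case False
      obtain Mx where Mx: "m x = ereal Mx" using False m_nminf[OF G, of x] by (cases "m x") auto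
      obtain My where My: "m y = ereal My" using False m_nminf[OF G, of y] by (cases "m y") auto
      have zp: "0 < z" using 3 xz by simp
      have rhs: "ereal (1-t) * h x + ereal t * h y = ereal ((1-t)*(x*Mx) + t*(y*My))"
        using 3 Mx My xy by (simp add: h_def)
      have "ereal z * m z \<le> ereal ((1-t)*(x*Mx) + t*(y*My))"
      proof (rule ereal_le_eps)
        fix e :: real assume e: "0<e"
        obtain s1 a where s1: "0<s1" "s1\<le>x" "r s1 = ereal a" "a < Mx + e/z"
          using below_m[OF Mx, of "e/z"] e zp by auto
        obtain s2 b where s2: "0<s2" "s2\<le>y" "r s2 = ereal b" "b < My + e/z"
          using below_m[OF My, of "e/z"] e zp by auto
        have "ereal z * m z \<le> ereal ((1-t)*(x*a) + t*(y*b))"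
          by (rule pw2[OF s1(1,2) xz s2(1,2) zy z_def t s1(3) s2(3)])
        also have "\<dots> \<le> ereal ((1-t)*(x*Mx) + t*(y*My) + e)"
        proof -
          have "(1-t)*(x*a) \<le> (1-t)*(x*(Mx + e/z))" using s1 t 3 by (intro mult_left_mono) auto
          moreover have "t*(y*b) \<le> t*(y*(My + e/z))" using s2 t 3 xy by (intro mult_left_mono) auto
          moreover have "(1-t)*(x*(Mx + e/z)) + t*(y*(My + e/z)) = (1-t)*(x*Mx) + t*(y*My) + z*(e/z)"
          proof -
            have gen: "\<And>E. (1-t)*(x*(Mx+E)) + t*(y*(My+E)) = (1-t)*(x*Mx) + t*(y*My) + ((1-t)*x + t*y)*E"
              by (simp add: algebra_simps)
            show ?thesis using gen[of "e/z"] unfolding z_def[symmetric] .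
          qed
          moreover have "z*(e/z) = e" using zp by simp
          ultimately show ?thesis by simp
        qed
        finally show "ereal z * m z \<le> ereal ((1-t)*(x*Mx) + t*(y*My) + e)" .
      qed
      thus ?thesis using rhs hpos[OF zp] by simp
    qed
  qed
  thus ?thesis unfolding z_def .
qed

lemma h_econvex: assumes G: "Gm \<noteq> -\<infinity>" shows "econvex h"
  unfolding econvex_def
proof (intro allI impI)
  fix x y t :: real assume t: "0 < t \<and> t < 1"
  consider "x<y" | "x=y" | "y<x" by linarith
  then show "h ((1 - t) * x + t * y) \<le> ereal (1 - t) * h x + ereal t * h y"
  proof cases
    case 1 then show ?thesis using hconv_lt[OF G 1] t by blast
  next
    case 2
    have eq: "(1 - t) * x + t * x = x" by (simp add: algebra_simps)
    have "ereal (1 - t) * h x + ereal t * h x = h x"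
      using h_nminf[OF G, of x] t by (cases "h x") (auto simp: algebra_simps)
    then show ?thesis using 2 eq by simp
  next
    case 3
    have t': "0 < 1-t" "1-t < 1" using t by auto
    have "h ((1-(1-t))*y + (1-t)*x) \<le> ereal (1-(1-t)) * h y + ereal (1-t) * h x"
      by (rule hconv_lt[OF G 3 t'])
    then show ?thesis by (simp add: add.commute)
  qed
qed

lemma h_cand: assumes G: "Gm \<noteq> -\<infinity>" shows "h \<in> nat_cands f"
  unfolding nat_cands_def
proof (intro CollectI conjI allI impI)
  show "econvex h" by (rule h_econvex[OF G])
  show "\<And>\<theta>. h \<theta> \<noteq> -\<infinity>" using h_nminf[OF G] by blast
  show "\<And>\<theta>. h \<theta> \<le> f \<theta>" by (rule h_le_f)
  fix \<theta>1 \<theta>2 :: real assume "0 < \<theta>1 \<and> \<theta>1 \<le> \<theta>2"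
  thus "h \<theta>2 / ereal \<theta>2 \<le> h \<theta>1 / ereal \<theta>1" using h_div m_anti by simp
qed

lemma fnat_eq_h: "Gm \<noteq> -\<infinity> \<Longrightarrow> fnat f = h"
  using fnat_h h_cand by blast

end



locale P9G = P9 +
  assumes G: "Gm \<noteq> -\<infinity>"
begin

definition tv where "tv = Sup (ereal ` {\<theta>. f \<theta> = fnat f \<theta>})"

lemma fnat_h': "fnat f = h" using fnat_eq_h[OF G] .

lemma tv_h: "tv = Sup (ereal ` {\<theta>. f \<theta> = h \<theta>})"
  unfolding tv_def fnat_h' ..

lemma Gm_fin: "Gm < \<infinity>"
proof -
  obtain \<theta>1 where t1: "\<theta>1 > 0" "f \<theta>1 < \<infinity>" using finpos by auto
  have rl: "r \<theta>1 < \<infinity>" using t1 r_mult[of \<theta>1] r_nminf[of \<theta>1] by (cases "r \<theta>1") auto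
  show ?thesis using Gm_le[OF t1(1)] rl by (rule le_less_trans)
qed

lemma GmR: obtains Gr where "Gm = ereal Gr"
  using G Gm_fin by (cases Gm) auto

lemma Q_iff: "f \<theta> = h \<theta> \<longleftrightarrow> \<theta> \<le> 0 \<or> isE \<theta>"
proof (cases "\<theta> \<le> 0")
  case True then show ?thesis by (simp add: h_def)
next
  case False
  hence tp: "0<\<theta>" by simp
  have "f \<theta> = h \<theta> \<longleftrightarrow> r \<theta> = m \<theta>"
  proof
    assume "f \<theta> = h \<theta>"
    hence "f \<theta> / ereal \<theta> = h \<theta> / ereal \<theta>" by simp
    thus "r \<theta> = m \<theta>" using h_div[OF tp] unfolding r_def by simp
  next
    assume "r \<theta> = m \<theta>"
    thus "f \<theta> = h \<theta>" using r_mult[OF tp] hpos[OF tp] by simp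
  qed
  also have "\<dots> \<longleftrightarrow> r \<theta> \<le> m \<theta>" using m_le[OF tp order_refl] by auto
  also have "\<dots> \<longleftrightarrow> isE \<theta>" unfolding isE_def m_def using tp by (auto simp: le_INF_iff)
  finally show ?thesis using False by simp
qed

lemma tv_ge0: "0 \<le> tv"
proof -
  have "0 \<in> {\<theta>. f \<theta> = h \<theta>}" by (simp add: h_def)
  hence "ereal 0 \<le> tv" unfolding tv_h by (intro Sup_upper) auto
  thus ?thesis by (simp add: zero_ereal_def)
qed

lemma below_v: assumes "0<\<theta>" "ereal \<theta> < tv" shows "isE \<theta>"
proof -
  obtain q where q: "q \<in> {\<theta>. f \<theta> = h \<theta>}" "ereal \<theta> < ereal q"
    using assms(2) unfolding tv_h by (auto simp: less_Sup_iff)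
  hence "isE q" using Q_iff assms(1) by auto
  thus ?thesis using isE_down assms(1) q(2) by auto
qed

lemma above_v: assumes "tv < ereal \<theta>" shows "0 < \<theta>" "\<not> isE \<theta>"
proof -
  have "0 < ereal \<theta>" using order.strict_trans1[OF tv_ge0 assms] .
  thus tp: "0 < \<theta>" by (simp add: zero_ereal_def)
  show "\<not> isE \<theta>"
  proof
    assume "isE \<theta>"
    hence "\<theta> \<in> {\<theta>. f \<theta> = h \<theta>}" using Q_iff by auto
    hence "ereal \<theta> \<le> tv" unfolding tv_h by (intro Sup_upper) auto
    thus False using assms by simp
  qed
qed

lemma lin_ge: "ereal \<theta> * Gm \<le> f \<theta>"
proof -
  obtain Gr where Gr: "Gm = ereal Gr" by (rule GmR)
  consider "\<theta> < 0" | "\<theta> = 0" | "\<theta> > 0" by linarith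
  then show ?thesis
  proof cases
    case 1 then show ?thesis using infneg by simp
  next
    case 2 then show ?thesis using f0_ge[OF G] Gr by (simp add: zero_ereal_def)
  next
    case 3
    have "ereal \<theta> * Gm \<le> ereal \<theta> * r \<theta>" using Gm_le[OF 3] 3 by (intro ereal_mult_left_mono) auto
    thus ?thesis using r_mult[OF 3] by simp
  qed
qed

lemma m0: "m 0 = \<infinity>" unfolding m_def by (simp add: top_ereal_def)

lemma RA: assumes "tv = ereal v" "Gm < m v" "Gm < c" "0<\<delta>"
  shows "\<exists>s. v < s \<and> s \<le> v+\<delta> \<and> r s < c"
proof -
  have "tv < ereal (v+\<delta>)" using assms by simp
  hence "0 < v+\<delta>" "\<not> isE (v+\<delta>)" using above_v by auto
  hence "m (v+\<delta>) = Gm" using notE_m by blast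
  hence "m (v+\<delta>) < min c (m v)" using assms by simp
  then obtain s where s: "s \<in> {0<..v+\<delta>}" "r s < min c (m v)" unfolding m_def[of "v+\<delta>"]
    using INF_less_iff[of r "{0<..v+\<delta>}" "min c (m v)"] by blast
  have "v < s"
  proof (rule ccontr)
    assume "\<not> v < s"
    hence mvr: "m v \<le> r s" using m_le s by auto
    have "r s < m v" using s(2) by simp
    thus False using mvr by (meson leD)
  qed
  thus ?thesis using s by auto
qed

lemma AP: assumes tv: "tv = ereal v" and fv: "f v \<noteq> ereal v * Gm" and c: "Gm < ereal c" and d: "0<\<delta>"
  shows "\<exists>s. s \<noteq> v \<and> \<bar>s - v\<bar> < \<delta> \<and> 0 < s \<and> r s < ereal c"
proof -
  have v0: "0 \<le> v" using tv_ge0 tv by (simp add: zero_ereal_def)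
  obtain Gr where Gr: "Gm = ereal Gr" by (rule GmR)
  show ?thesis
  proof (cases "Gm < m v")
    case True
    obtain s where s: "v < s" "s \<le> v + \<delta>/2" "r s < ereal c" using RA[OF tv True c, of "\<delta>/2"] d by auto
    thus ?thesis using v0 d by auto
  next
    case False
    hence mv: "m v = Gm" using m_ge[of v] by simp
    have vp: "0 < v" using mv m0 v0 Gr by (cases "v = 0") auto
    have "r v \<noteq> Gm"
    proof
      assume "r v = Gm"
      hence "f v = ereal v * Gm" using r_mult[OF vp] by simp
      thus False using fv by simp
    qed
    hence rv: "Gm < r v" using Gm_le[OF vp] by simp
    have "m v < min (ereal c) (r v)" using mv rv c by simp
    then obtain s0 where s0: "s0 \<in> {0<..v}" "r s0 < min (ereal c) (r v)" unfolding m_def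
      using INF_less_iff[of r "{0<..v}" "min (ereal c) (r v)"] by blast
    have s0v: "s0 < v" using s0 by (cases "s0 = v") auto
    define s where "s = max s0 (v - \<delta>/2)"
    have s: "s0 \<le> s" "s < v" "0 < s" "\<bar>s - v\<bar> < \<delta>" using s0 s0v d unfolding s_def by auto
    have "isE s" using below_v[OF s(3)] s(2) tv by simp
    hence "r s \<le> r s0" using s0 s unfolding isE_def by auto
    moreover have "r s0 < ereal c" using s0(2) by simp
    ultimately have "r s < ereal c" by (rule le_less_trans)
    thus ?thesis using s by auto
  qed
qed

end


context P9G begin

lemma LL: assumes tv: "tv = ereal v" and fv: "f v \<noteq> ereal v * Gm" and d: "0<d"
  and P: "\<forall>x. x \<noteq> v \<and> dist x v < d \<longrightarrow> P x"
  shows "Inf (f ` Collect P) \<le> ereal v * Gm"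
proof -
  obtain Gr where Gr: "Gm = ereal Gr" by (rule GmR)
  have v0: "0 \<le> v" using tv_ge0 tv by (simp add: zero_ereal_def)
  have "Inf (f ` Collect P) \<le> ereal (v * Gr)"
  proof (rule ereal_le_eps)
    fix \<epsilon> :: real assume e: "0 < \<epsilon>"
    define c where "c = Gr + \<epsilon>/(2 *(v+1))"
    have "0 < \<epsilon>/(2 *(v+1))" using e v0 by simp
    hence cG: "Gm < ereal c" using Gr unfolding c_def by simp
    define \<delta> where "\<delta> = min d (\<epsilon>/(2 *(\<bar>c\<bar>+1)))"
    have dp: "0 < \<delta>" unfolding \<delta>_def using d e by (simp add: add_pos_nonneg)
    obtain s where s: "s \<noteq> v" "\<bar>s - v\<bar> < \<delta>" "0 < s" "r s < ereal c" using AP[OF tv fv cG dp] by blast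
    have Ps: "P s" using P s unfolding \<delta>_def by (auto simp: dist_real_def)
    have "f s = ereal s * r s" using r_mult[OF s(3)] by simp
    also have "\<dots> \<le> ereal s * ereal c" using s by (intro ereal_mult_left_mono) auto
    also have "\<dots> = ereal (s * c)" by simp
    finally have fs: "f s \<le> ereal (s * c)" .
    have a1: "v *(\<epsilon>/(2 *(v+1))) \<le> \<epsilon>/2"
    proof -
      have "v *(\<epsilon>/(2 *(v+1))) = (\<epsilon>/2) *(v/(v+1))" using v0 by (simp add: field_simps)
      also have "\<dots> \<le> (\<epsilon>/2) *1" using v0 e by (intro mult_left_mono) auto
      finally show ?thesis by simp
    qed
    have a2: "(s-v) * c \<le> \<bar>s-v\<bar>*\<bar>c\<bar>" by (metis abs_ge_self abs_mult)
    have a3: "\<bar>s-v\<bar>*\<bar>c\<bar> \<le> (\<epsilon>/(2 *(\<bar>c\<bar>+1))) *\<bar>c\<bar>"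
      using s(2) unfolding \<delta>_def by (intro mult_right_mono) auto
    have a5: "(\<epsilon>/(2 *(\<bar>c\<bar>+1))) *\<bar>c\<bar> \<le> \<epsilon>/2"
    proof -
      have "(\<epsilon>/(2 *(\<bar>c\<bar>+1))) *\<bar>c\<bar> = (\<epsilon>/2) *(\<bar>c\<bar>/(\<bar>c\<bar>+1))" by (simp add: field_simps)
      also have "\<dots> \<le> (\<epsilon>/2) *1" using e by (intro mult_left_mono) auto
      finally show ?thesis by simp
    qed
    have e0: "s * c = v * c + (s-v) * c" by (simp add: algebra_simps)
    have e00: "v * c = v * Gr + v *(\<epsilon>/(2 *(v+1)))" unfolding c_def by (simp add: distrib_left)
    have e1: "s * c = v * Gr + v *(\<epsilon>/(2 *(v+1))) + (s-v) * c" using e0 e00 by linarith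
    have "s * c \<le> v * Gr + \<epsilon>" using a1 a2 a3 a5 e1 by linarith
    hence "f s \<le> ereal (v * Gr + \<epsilon>)" using fs by (meson ereal_less_eq(3) order_trans)
    moreover have "Inf (f ` Collect P) \<le> f s" using Ps by (intro Inf_lower) auto
    ultimately show "Inf (f ` Collect P) \<le> ereal (v * Gr + \<epsilon>)" by (rule order_trans[rotated])
  qed
  thus ?thesis using Gr by simp
qed

lemma LA: assumes tv: "tv = ereal v" and fv: "f v \<noteq> ereal v * Gm"
  shows "Liminf (at v) f \<le> ereal v * Gm"
proof (rule Liminf_least)
  fix P assume "eventually P (at v)"
  then obtain d where d: "d > 0" "\<forall>x\<in>UNIV. x \<noteq> v \<and> dist x v < d \<longrightarrow> P x"
    unfolding eventually_at by blast
  show "Inf (f ` Collect P) \<le> ereal v * Gm" using LL[OF tv fv d(1)] d(2) by blast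
qed

lemma LN: assumes tv: "tv = ereal v" and fv: "f v \<noteq> ereal v * Gm"
  shows "clf f v \<le> ereal v * Gm"
  unfolding clf_def
proof (rule Liminf_least)
  fix P assume "eventually P (nhds v)"
  then obtain d where d: "d > 0" "\<forall>x. dist x v < d \<longrightarrow> P x"
    unfolding eventually_nhds_metric by blast
  show "Inf (f ` Collect P) \<le> ereal v * Gm" using LL[OF tv fv d(1)] d(2) by blast
qed

lemma clf_le_f: "clf g x \<le> g x"
  unfolding clf_def
proof (rule Liminf_least)
  fix P assume "eventually P (nhds x)"
  hence "P x" by (rule eventually_nhds_x_imp_x)
  thus "Inf (g ` Collect P) \<le> g x" by (intro Inf_lower) auto
qed

lemma clf_ge: "ereal v * Gm \<le> clf f v"
proof -
  obtain Gr where Gr: "Gm = ereal Gr" by (rule GmR)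
  have "\<forall>y < ereal (v * Gr). eventually (\<lambda>x. y < f x) (nhds v)"
  proof (intro allI impI)
    fix y assume y: "y < ereal (v * Gr)"
    show "eventually (\<lambda>x. y < f x) (nhds v)"
    proof (cases y)
      case MInf
      then show ?thesis using nominf by (intro always_eventually) auto
    next
      case PInf then show ?thesis using y by simp
    next
      case (real y0)
      hence y0: "y0 < v * Gr" using y by simp
      define d where "d = (v * Gr - y0)/(\<bar>Gr\<bar>+1)"
      have dp: "0 < d" unfolding d_def using y0 by (simp add: add_nonneg_pos)
      show ?thesis unfolding eventually_nhds_metric
      proof (intro exI[of _ d] conjI allI impI dp)
        fix x assume "dist x v < d"
        hence xd: "\<bar>x - v\<bar> < d" by (simp add: dist_real_def)
        have b1: "v * Gr - \<bar>x-v\<bar>*\<bar>Gr\<bar> \<le> x * Gr"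
        proof -
          have q1: "-(\<bar>x-v\<bar>*\<bar>Gr\<bar>) \<le> (x-v) * Gr" by (metis abs_ge_minus_self abs_mult minus_le_iff)
          have q2: "x * Gr = v * Gr + (x-v) * Gr" by (simp add: algebra_simps)
          show ?thesis using q1 q2 by linarith
        qed
        have b2: "\<bar>x-v\<bar>*\<bar>Gr\<bar> \<le> d *\<bar>Gr\<bar>" using xd by (intro mult_right_mono) auto
        have b3: "d *\<bar>Gr\<bar> < v * Gr - y0"
        proof -
          have "d *\<bar>Gr\<bar> = (v * Gr - y0) *(\<bar>Gr\<bar>/(\<bar>Gr\<bar>+1))" unfolding d_def by (simp add: field_simps)
          also have "\<dots> < (v * Gr - y0) *1" using y0 by (intro mult_strict_left_mono) auto
          finally show ?thesis by simp
        qed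
        have "y0 < x * Gr" using b1 b2 b3 by linarith
        hence "ereal y0 < ereal x * Gm" using Gr by simp
        also have "\<dots> \<le> f x" by (rule lin_ge)
        finally show "y < f x" using real by simp
      qed
    qed
  qed
  thus ?thesis unfolding clf_def using Gr by (simp add: le_Liminf_iff)
qed

lemma clf_eq: assumes tv: "tv = ereal v" shows "clf f v = ereal v * Gm"
proof (rule antisym[OF _ clf_ge])
  show "clf f v \<le> ereal v * Gm"
  proof (cases "f v = ereal v * Gm")
    case True then show ?thesis using clf_le_f[of f v] by simp
  next
    case False then show ?thesis using LN[OF tv] by blast
  qed
qed

end


context P9G begin

lemma m_eq_right: assumes tv: "tv = ereal v" and psi: "Inf (ereal ` dom_f f) < ereal v"
  shows "m v = Gm"
proof (rule ccontr)
  assume "m v \<noteq> Gm"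
  hence mv: "Gm < m v" using m_ge[of v] by simp
  obtain Gr where Gr: "Gm = ereal Gr" by (rule GmR)
  obtain p where p: "p \<in> dom_f f" "ereal p < ereal v" using psi by (auto simp: Inf_less_iff)
  have fpfin: "f p \<noteq> \<infinity>" using p unfolding dom_f_def by simp
  then obtain fp where fp: "f p = ereal fp" using fin_real by blast
  have p0: "0 \<le> p" using fpfin infneg by (meson not_le)
  have pv: "p < v" using p by simp
  have vp: "0 < v" using p0 pv by simp
  obtain c1 where c1: "Gm < ereal c1" "ereal c1 < m v" using ereal_dense2[OF mv] by blast
  define c2 where "c2 = (Gr + c1)/2"
  have Grc1: "Gr < c1" using c1 Gr by simp
  have c2: "Gr < c2" "c2 < c1" unfolding c2_def using Grc1 by auto
  define K where "K = \<bar>fp - p * c2\<bar>"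
  have K0: "0 \<le> K" unfolding K_def by simp
  define \<delta> where "\<delta> = (v * (c1 - c2) / (K + 1)) * (v - p)"
  have dp: "0 < \<delta>" unfolding \<delta>_def using vp c2 pv K0 by (intro divide_pos_pos mult_pos_pos) auto
  have "Gm < ereal c2" using Gr c2 by simp
  then obtain s where s: "v < s" "s \<le> v + \<delta>" "r s < ereal c2" using RA[OF tv mv _ dp] by blast
  have sp: "0 < s" using s vp by simp
  have "r s \<noteq> -\<infinity>" using r_nminf[OF sp] .
  then obtain \<rho> where rho: "r s = ereal \<rho>" using s(3) by (cases "r s") auto
  have rc: "\<rho> < c2" using s(3) rho by simp
  have fs: "f s = ereal (s * \<rho>)" using r_mult[OF sp] rho by simp
  define lam where "lam = (s - v) / (s - p)"
  have sp2: "0 < s - p" using s pv by simp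
  have lam0: "0 < lam" "lam < 1" unfolding lam_def using s pv sp2 by (auto simp: divide_less_eq)
  have q1a: "lam * (s - p) = s - v" unfolding lam_def using sp2 by simp
  have q1: "(1 - lam) * s + lam * p = v"
  proof -
    have "(1 - lam) * s + lam * p = s - lam * (s - p)" by (simp add: algebra_simps)
    thus ?thesis using q1a by simp
  qed
  have "f ((1 - lam) * s + lam * p) \<le> ereal ((1 - lam) * (s * \<rho>) + lam * fp)"
    by (rule conv_real[OF lam0 fs fp])
  hence fv: "f v \<le> ereal ((1 - lam) * (s * \<rho>) + lam * fp)" using q1 by simp
  have "ereal (v * c1) = ereal v * ereal c1" by simp
  also have "\<dots> \<le> ereal v * m v" using c1 vp by (intro ereal_mult_left_mono) auto
  also have "\<dots> \<le> f v" by (rule mz_le_fz[OF vp])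
  finally have "ereal (v * c1) \<le> ereal ((1 - lam) * (s * \<rho>) + lam * fp)" using fv by (rule order_trans)
  hence A: "v * c1 \<le> (1 - lam) * (s * \<rho>) + lam * fp" by simp
  have q6: "(1 - lam) * (s * \<rho>) \<le> (1 - lam) * (s * c2)"
    using lam0 sp rc by (intro mult_left_mono) auto
  have id: "(1 - lam) * (s * c2) + lam * fp = c2 * v + lam * (fp - p * c2)"
  proof -
    have "c2 * v = c2 * ((1 - lam) * s + lam * p)" using q1 by simp
    thus ?thesis by (simp add: algebra_simps)
  qed
  have q5: "lam * (fp - p * c2) \<le> lam * K" unfolding K_def using lam0 by (intro mult_left_mono) auto
  have q2: "lam \<le> v * (c1 - c2) / (K + 1)"
  proof -
    have "lam \<le> (s - v) / (v - p)" unfolding lam_def using s pv by (intro divide_left_mono) auto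
    also have "\<dots> \<le> \<delta> / (v - p)" using s pv by (intro divide_right_mono) auto
    also have "\<dots> = v * (c1 - c2) / (K + 1)"
    proof -
      have nz: "v - p \<noteq> 0" using pv by simp
      show ?thesis unfolding \<delta>_def using nz by (rule nonzero_mult_div_cancel_right)
    qed
    finally show ?thesis .
  qed
  have q3: "lam * K \<le> (v * (c1 - c2) / (K + 1)) * K" using q2 K0 by (intro mult_right_mono) auto
  have q4: "(v * (c1 - c2) / (K + 1)) * K < v * (c1 - c2)"
  proof -
    have "(v * (c1 - c2) / (K + 1)) * K = (v * (c1 - c2)) * (K / (K + 1))" by simp
    also have "\<dots> < (v * (c1 - c2)) * 1" using vp c2 K0 by (intro mult_strict_left_mono) auto
    finally show ?thesis by simp
  qed
  have "v * c1 < c2 * v + v * (c1 - c2)" using A q6 id q5 q3 q4 by linarith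
  thus False by (simp add: algebra_simps)
qed

lemma v_psi: assumes tv: "tv = ereal v" and psi: "Inf (ereal ` dom_f f) = ereal v"
  shows "f v = h v"
proof -
  have "v \<le> 0 \<or> isE v"
  proof (cases "v \<le> 0")
    case False
    hence vp: "0 < v" by simp
    have "isE v" unfolding isE_def
    proof (intro conjI allI impI vp)
      fix s assume s: "0 < s \<and> s \<le> v"
      show "r v \<le> r s"
      proof (cases "s = v")
        case False
        hence "ereal s < Inf (ereal ` dom_f f)" using s psi by simp
        hence "s \<notin> dom_f f" by (meson Inf_lower image_eqI not_le)
        hence "f s = \<infinity>" unfolding dom_f_def by simp
        hence "r s = \<infinity>" using r_inf s by simp
        thus ?thesis by simp
      qed simp
    qed
    thus ?thesis by simp
  qed simp
  thus ?thesis using Q_iff by blast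
qed

lemma tend: assumes tv: "tv = \<infinity>" shows "((\<lambda>\<theta>. f \<theta> / ereal \<theta>) \<longlongrightarrow> Gm) at_top"
proof (rule order_tendstoI)
  fix a assume a: "a < Gm"
  show "eventually (\<lambda>\<theta>. a < f \<theta> / ereal \<theta>) at_top"
    unfolding eventually_at_top_linorder
  proof (intro exI[of _ 1] allI impI)
    fix \<theta> :: real assume "1 \<le> \<theta>"
    hence "Gm \<le> r \<theta>" using Gm_le by simp
    thus "a < f \<theta> / ereal \<theta>" using a unfolding r_def by simp
  qed
next
  fix a assume a: "Gm < a"
  then obtain s where s: "s \<in> {0<..}" "r s < a" unfolding Gm_def using INF_less_iff[of r "{0<..}" a] by blast
  show "eventually (\<lambda>\<theta>. f \<theta> / ereal \<theta> < a) at_top"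
    unfolding eventually_at_top_linorder
  proof (intro exI[of _ s] allI impI)
    fix \<theta> :: real assume th: "s \<le> \<theta>"
    hence tp: "0 < \<theta>" using s by simp
    have "isE \<theta>" using below_v[OF tp] tv by simp
    hence "r \<theta> \<le> r s" using s th unfolding isE_def by auto
    hence "r \<theta> < a" using s(2) by (rule le_less_trans)
    thus "f \<theta> / ereal \<theta> < a" unfolding r_def .
  qed
qed

end



theorem proposition9:
  fixes f :: "real \<Rightarrow> ereal"
  assumes conv: "econvex f"
    and nominf: "\<forall>\<theta>. f \<theta> \<noteq> -\<infinity>"
    and finpos: "\<exists>\<theta>>0. f \<theta> < \<infinity>"
    and infneg: "\<forall>\<theta><0. f \<theta> = \<infinity>"
  defines "\<Gamma> \<equiv> Gam (fconj f)"
    and "\<theta>v \<equiv> vtheta f"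
    and "\<psi> \<equiv> Inf (ereal ` dom_f f)"
  shows
    "(\<Gamma> = -\<infinity> \<longrightarrow> fnat f = (\<lambda>_. -\<infinity>) \<and> \<theta>v = -\<infinity>)
   \<and> (\<Gamma> \<noteq> -\<infinity> \<longrightarrow> \<theta>v \<ge> 0 \<and> (\<forall>\<theta>. 0 \<le> \<theta> \<and> ereal \<theta> < \<theta>v \<longrightarrow> fnat f \<theta> = f \<theta>))
   \<and> (0 \<le> \<theta>v \<and> \<theta>v < \<infinity> \<longrightarrow>
        (\<forall>\<theta>. ereal \<theta> > \<theta>v \<longrightarrow> fnat f \<theta> = ereal \<theta> * \<Gamma> \<and> ereal \<theta> * \<Gamma> < f \<theta>)
      \<and> (\<theta>v = \<psi> \<longrightarrow> fnat f (real_of_ereal \<theta>v) = f (real_of_ereal \<theta>v)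
            \<and> f (real_of_ereal \<theta>v) \<ge> clf f (real_of_ereal \<theta>v)
            \<and> clf f (real_of_ereal \<theta>v) = \<theta>v * \<Gamma>)
      \<and> (\<theta>v > \<psi> \<longrightarrow> fnat f (real_of_ereal \<theta>v) = \<theta>v * \<Gamma>
            \<and> \<theta>v * \<Gamma> = clf f (real_of_ereal \<theta>v)
            \<and> clf f (real_of_ereal \<theta>v) \<le> f (real_of_ereal \<theta>v)))
   \<and> \<Gamma> = (INF \<theta>\<in>{0<..}. fnat f \<theta> / ereal \<theta>)
   \<and> \<Gamma> = (INF \<theta>\<in>{0<..}. f \<theta> / ereal \<theta>)
   \<and> (0 < \<theta>v \<and> \<theta>v < \<infinity> \<and> lsc_at f (real_of_ereal \<theta>v) \<longrightarrow>
        \<Gamma> = f (real_of_ereal \<theta>v) / \<theta>v)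
   \<and> (\<theta>v = \<infinity> \<longrightarrow> ((\<lambda>\<theta>. f \<theta> / ereal \<theta>) \<longlongrightarrow> \<Gamma>) at_top)"
proof -
  interpret P9 f using conv nominf finpos infneg by unfold_locales
  have Gam: "\<Gamma> = Gm" using assms(5) Gam_eq by simp
  have INFf: "(INF \<theta>\<in>{0<..}. f \<theta> / ereal \<theta>) = Gm" unfolding Gm_def r_def ..
  show ?thesis
  proof (cases "Gm = -\<infinity>")
    case True
    have fn: "fnat f = (\<lambda>_. -\<infinity>)" by (rule fnat_minf[OF True])
    have "{\<theta>. f \<theta> = fnat f \<theta>} = {}" using fn nominf by auto
    hence tvm: "\<theta>v = -\<infinity>" using assms(6) unfolding vtheta_def by (simp add: bot_ereal_def)
    have INFn: "(INF \<theta>\<in>{0<..}. fnat f \<theta> / ereal \<theta>) = -\<infinity>"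
    proof -
      have "(INF \<theta>\<in>{0<..}. fnat f \<theta> / ereal \<theta>) \<le> fnat f 1 / ereal 1" by (rule INF_lower) auto
      thus ?thesis using fn by simp
    qed
    show ?thesis
      apply (intro conjI)
      subgoal using fn tvm by simp
      subgoal using Gam True by simp
      subgoal using tvm by simp
      subgoal using INFn Gam True by simp
      subgoal using INFf Gam by simp
      subgoal using tvm by simp
      subgoal using tvm by simp
      done
  next
    case False
    interpret P9G f using False by unfold_locales
    have tvd: "\<theta>v = tv" using assms(6) unfolding vtheta_def tv_def by simp
    have fn: "fnat f = h" by (rule fnat_h')
    obtain Gr where Gr: "Gm = ereal Gr" by (rule GmR)
    have psi0: "0 \<le> \<psi>"
    proof -
      have "\<forall>x\<in>ereal ` dom_f f. 0 \<le> x"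
      proof
        fix x assume "x \<in> ereal ` dom_f f"
        then obtain y where y: "x = ereal y" "f y < \<infinity>" unfolding dom_f_def by auto
        have "0 \<le> y"
        proof (rule ccontr)
          assume "\<not> 0 \<le> y"
          hence "f y = \<infinity>" using infneg by simp
          thus False using y(2) by simp
        qed
        thus "0 \<le> x" using y by (simp add: zero_ereal_def)
      qed
      thus ?thesis unfolding assms(7) by (meson Inf_greatest)
    qed
    have P2: "\<theta>v \<ge> 0 \<and> (\<forall>\<theta>. 0 \<le> \<theta> \<and> ereal \<theta> < \<theta>v \<longrightarrow> fnat f \<theta> = f \<theta>)"
    proof (intro conjI allI impI)
      show "\<theta>v \<ge> 0" using tv_ge0 tvd by simp
      fix \<theta> assume th: "0 \<le> \<theta> \<and> ereal \<theta> < \<theta>v"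
      show "fnat f \<theta> = f \<theta>"
      proof (cases "\<theta> = 0")
        case True then show ?thesis using fn by (simp add: h_def)
      next
        case False
        hence "0 < \<theta>" using th by simp
        hence "isE \<theta>" using below_v th tvd by simp
        hence "f \<theta> = h \<theta>" using Q_iff by blast
        thus ?thesis using fn by simp
      qed
    qed
    have P3: "0 \<le> \<theta>v \<and> \<theta>v < \<infinity> \<longrightarrow>
        (\<forall>\<theta>. ereal \<theta> > \<theta>v \<longrightarrow> fnat f \<theta> = ereal \<theta> * \<Gamma> \<and> ereal \<theta> * \<Gamma> < f \<theta>)
      \<and> (\<theta>v = \<psi> \<longrightarrow> fnat f (real_of_ereal \<theta>v) = f (real_of_ereal \<theta>v)
            \<and> f (real_of_ereal \<theta>v) \<ge> clf f (real_of_ereal \<theta>v)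
            \<and> clf f (real_of_ereal \<theta>v) = \<theta>v * \<Gamma>)
      \<and> (\<theta>v > \<psi> \<longrightarrow> fnat f (real_of_ereal \<theta>v) = \<theta>v * \<Gamma>
            \<and> \<theta>v * \<Gamma> = clf f (real_of_ereal \<theta>v)
            \<and> clf f (real_of_ereal \<theta>v) \<le> f (real_of_ereal \<theta>v))"
    proof (intro impI)
      assume fin: "0 \<le> \<theta>v \<and> \<theta>v < \<infinity>"
      then obtain v where v: "\<theta>v = ereal v" by (cases \<theta>v) auto
      have tv: "tv = ereal v" using v tvd by simp
      have rv: "real_of_ereal \<theta>v = v" using v by simp
      have A: "\<forall>\<theta>. ereal \<theta> > \<theta>v \<longrightarrow> fnat f \<theta> = ereal \<theta> * \<Gamma> \<and> ereal \<theta> * \<Gamma> < f \<theta>"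
      proof (intro allI impI)
        fix \<theta> assume "ereal \<theta> > \<theta>v"
        hence a: "tv < ereal \<theta>" using tvd by simp
        have tp: "0 < \<theta>" and nE: "\<not> isE \<theta>" using above_v[OF a] by auto
        have hth: "h \<theta> = ereal \<theta> * Gm" using notE_m[OF tp nE] hpos[OF tp] by simp
        have "f \<theta> \<noteq> h \<theta>" using Q_iff tp nE by auto
        hence "h \<theta> < f \<theta>" using h_le_f[of \<theta>] by simp
        thus "fnat f \<theta> = ereal \<theta> * \<Gamma> \<and> ereal \<theta> * \<Gamma> < f \<theta>" using hth fn Gam by simp
      qed
      have B: "\<theta>v = \<psi> \<longrightarrow> fnat f (real_of_ereal \<theta>v) = f (real_of_ereal \<theta>v)
            \<and> f (real_of_ereal \<theta>v) \<ge> clf f (real_of_ereal \<theta>v)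
            \<and> clf f (real_of_ereal \<theta>v) = \<theta>v * \<Gamma>"
      proof
        assume "\<theta>v = \<psi>"
        hence psi: "Inf (ereal ` dom_f f) = ereal v" using v assms(7) by simp
        show "fnat f (real_of_ereal \<theta>v) = f (real_of_ereal \<theta>v)
            \<and> f (real_of_ereal \<theta>v) \<ge> clf f (real_of_ereal \<theta>v)
            \<and> clf f (real_of_ereal \<theta>v) = \<theta>v * \<Gamma>"
          using v_psi[OF tv psi] fn rv clf_le_f[of f v] clf_eq[OF tv] v Gam by simp
      qed
      have C: "\<theta>v > \<psi> \<longrightarrow> fnat f (real_of_ereal \<theta>v) = \<theta>v * \<Gamma>
            \<and> \<theta>v * \<Gamma> = clf f (real_of_ereal \<theta>v)
            \<and> clf f (real_of_ereal \<theta>v) \<le> f (real_of_ereal \<theta>v)"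
      proof
        assume gt: "\<theta>v > \<psi>"
        hence psi: "Inf (ereal ` dom_f f) < ereal v" using v assms(7) by simp
        have vp: "0 < v" using gt psi0 v by (metis ereal_less(2) le_less_trans zero_ereal_def)
        have "h v = ereal v * Gm" using m_eq_right[OF tv psi] hpos[OF vp] by simp
        thus "fnat f (real_of_ereal \<theta>v) = \<theta>v * \<Gamma>
            \<and> \<theta>v * \<Gamma> = clf f (real_of_ereal \<theta>v)
            \<and> clf f (real_of_ereal \<theta>v) \<le> f (real_of_ereal \<theta>v)"
          using fn rv clf_le_f[of f v] clf_eq[OF tv] v Gam by simp
      qed
      show "(\<forall>\<theta>. ereal \<theta> > \<theta>v \<longrightarrow> fnat f \<theta> = ereal \<theta> * \<Gamma> \<and> ereal \<theta> * \<Gamma> < f \<theta>)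
      \<and> (\<theta>v = \<psi> \<longrightarrow> fnat f (real_of_ereal \<theta>v) = f (real_of_ereal \<theta>v)
            \<and> f (real_of_ereal \<theta>v) \<ge> clf f (real_of_ereal \<theta>v)
            \<and> clf f (real_of_ereal \<theta>v) = \<theta>v * \<Gamma>)
      \<and> (\<theta>v > \<psi> \<longrightarrow> fnat f (real_of_ereal \<theta>v) = \<theta>v * \<Gamma>
            \<and> \<theta>v * \<Gamma> = clf f (real_of_ereal \<theta>v)
            \<and> clf f (real_of_ereal \<theta>v) \<le> f (real_of_ereal \<theta>v))"
        using A B C by blast
    qed
    have P4: "\<Gamma> = (INF \<theta>\<in>{0<..}. fnat f \<theta> / ereal \<theta>)"
    proof -
      have "(INF \<theta>\<in>{0<..}. fnat f \<theta> / ereal \<theta>) = (INF \<theta>\<in>{0<..}. m \<theta>)"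
        using fn h_div by (intro INF_cong) auto
      also have "\<dots> = Gm"
      proof (rule antisym)
        show "(INF \<theta>\<in>{0<..}. m \<theta>) \<le> Gm" unfolding Gm_def
        proof (rule INF_greatest)
          fix s :: real assume s: "s \<in> {0<..}"
          have "(INF \<theta>\<in>{0<..}. m \<theta>) \<le> m s" using s by (rule INF_lower)
          also have "\<dots> \<le> r s" using s m_le by simp
          finally show "(INF \<theta>\<in>{0<..}. m \<theta>) \<le> r s" .
        qed
        show "Gm \<le> (INF \<theta>\<in>{0<..}. m \<theta>)" by (rule INF_greatest) (rule m_ge)
      qed
      finally show ?thesis using Gam by simp
    qed
    have P6: "0 < \<theta>v \<and> \<theta>v < \<infinity> \<and> lsc_at f (real_of_ereal \<theta>v) \<longrightarrow>
        \<Gamma> = f (real_of_ereal \<theta>v) / \<theta>v"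
    proof
      assume as: "0 < \<theta>v \<and> \<theta>v < \<infinity> \<and> lsc_at f (real_of_ereal \<theta>v)"
      then obtain v where v: "\<theta>v = ereal v" by (cases \<theta>v) auto
      have tv: "tv = ereal v" using v tvd by simp
      have vp: "0 < v" using as v by (simp add: zero_ereal_def)
      have lsc: "f v \<le> Liminf (at v) f" using as v unfolding lsc_at_def by simp
      have fv: "f v = ereal v * Gm"
      proof (rule ccontr)
        assume "f v \<noteq> ereal v * Gm"
        hence "f v \<le> ereal v * Gm" using LA[OF tv] lsc by (meson order_trans)
        hence "f v = ereal v * Gm" using lin_ge[of v] by simp
        thus False using \<open>f v \<noteq> ereal v * Gm\<close> by simp
      qed
      show "\<Gamma> = f (real_of_ereal \<theta>v) / \<theta>v" using fv v vp Gam by (simp add: mult_div_cancel)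
    qed
    have P7: "\<theta>v = \<infinity> \<longrightarrow> ((\<lambda>\<theta>. f \<theta> / ereal \<theta>) \<longlongrightarrow> \<Gamma>) at_top"
      using tend tvd Gam by simp
    show ?thesis
      apply (intro conjI)
      subgoal using Gam False by simp
      subgoal using P2 by blast
      subgoal using P3 by blast
      subgoal using P4 by blast
      subgoal using INFf Gam by simp
      subgoal using P6 by blast
      subgoal using P7 by blast
      done
  qed
qed



end
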